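(* Let $G$ be a group satisfying the property $\mathsf{FM}$ and $\nu$ a conjugation-invariant pseudo-norm on $G$. Then for any elements $g_1,\dots,g_k\in G$ and real numbers $s_1,\dots,s_k$, the limit \[ \lim_{n\to\infty}\frac1n\,\nu\big(g_1^{[s_1n]}\cdots g_k^{[s_kn]}\big) \] exists, where $[\cdot]$ denotes the integer part.
   Context: A conjugation-invariant pseudo-norm on a group $G$ is a function $\nu\colon G\to\mathbb{R}_{\ge0}$ with $\nu(1)=0$, $\nu(f)=\nu(f^{-1})$, $\nu(fg)\le\nu(f)+\nu(g)$ and $\nu(gfg^{-1})=\nu(f)$ for all $f,g\in G$. For a subgroup $H\le G$, the fragmentation norm $\nu_H(f)$ is the minimal $k$ such that $f=g_1h_1g_1^{-1}\cdots g_kh_kg_k^{-1}$ with $g_i\in G$, $h_i\in H$ ($\infty$ if none exists); $G$ is c-generated by $H$ if $\nu_H$ is finite everywhere. For $K\subset G$, $\mathrm{D}^f_H(K)$ is the set of $h_0\in G$ such that for all $g_1,\dots,g_k\in G$ there is $h\in G$ such that every element of $hh_0h^{-1}K(hh_0h^{-1})^{-1}$ commutes with every element of $g_1Hg_1^{-1}\cup\dots\cup g_kHg_k^{-1}$. $(G,H)$ satisfies property $\mathsf{FM}$ if $G$ is c-generated by $H$ and $\mathrm{D}^f_H(h_1Hh_1^{-1}\cup\dots\cup h_kHh_k^{-1})\ne\emptyset$ for all $h_1,\dots,h_k\in G$; $G$ satisfies $\mathsf{FM}$ if $(G,H)$ does for some subgroup $H$. *)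

theory Defs
  imports "HOL-Algebra.Algebra" "HOL-Analysis.Analysis"
begin

definition conj_elt :: "('a, 'b) monoid_scheme \<Rightarrow> 'a \<Rightarrow> 'a \<Rightarrow> 'a" where
  "conj_elt G g x = g \<otimes>\<^bsub>G\<^esub> x \<otimes>\<^bsub>G\<^esub> inv\<^bsub>G\<^esub> g"

definition cinv_pseudo_norm :: "('a, 'b) monoid_scheme \<Rightarrow> ('a \<Rightarrow> real) \<Rightarrow> bool" where
  "cinv_pseudo_norm G \<nu> \<longleftrightarrow>
     (\<forall>f\<in>carrier G. \<nu> f \<ge> 0) \<and> \<nu> \<one>\<^bsub>G\<^esub> = 0 \<and>
     (\<forall>f\<in>carrier G. \<nu> (inv\<^bsub>G\<^esub> f) = \<nu> f) \<and>
     (\<forall>f\<in>carrier G. \<forall>g\<in>carrier G. \<nu> (f \<otimes>\<^bsub>G\<^esub> g) \<le> \<nu> f + \<nu> g) \<and>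
     (\<forall>f\<in>carrier G. \<forall>g\<in>carrier G. \<nu> (conj_elt G g f) = \<nu> f)"

definition gprod :: "('a, 'b) monoid_scheme \<Rightarrow> (nat \<Rightarrow> 'a) \<Rightarrow> nat \<Rightarrow> 'a" where
  "gprod G x k = foldr (\<lambda>i acc. x i \<otimes>\<^bsub>G\<^esub> acc) [0..<k] \<one>\<^bsub>G\<^esub>"

definition c_generated :: "('a, 'b) monoid_scheme \<Rightarrow> 'a set \<Rightarrow> bool" where
  "c_generated G H \<longleftrightarrow>
     (\<forall>f\<in>carrier G. \<exists>k g h. (\<forall>i<k. g i \<in> carrier G \<and> h i \<in> H) \<and>
        f = gprod G (\<lambda>i. conj_elt G (g i) (h i)) k)"

definition Df :: "('a, 'b) monoid_scheme \<Rightarrow> 'a set \<Rightarrow> 'a set \<Rightarrow> 'a set" where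
  "Df G H K = {h0 \<in> carrier G. \<forall>k (g :: nat \<Rightarrow> 'a). (\<forall>i<k. g i \<in> carrier G) \<longrightarrow>
      (\<exists>h\<in>carrier G. \<forall>x\<in>K. \<forall>i<k. \<forall>y\<in>H.
         conj_elt G (conj_elt G h h0) x \<otimes>\<^bsub>G\<^esub> conj_elt G (g i) y =
         conj_elt G (g i) y \<otimes>\<^bsub>G\<^esub> conj_elt G (conj_elt G h h0) x)}"

definition FM_pair :: "('a, 'b) monoid_scheme \<Rightarrow> 'a set \<Rightarrow> bool" where
  "FM_pair G H \<longleftrightarrow> subgroup H G \<and> c_generated G H \<and>
     (\<forall>k (h :: nat \<Rightarrow> 'a). (\<forall>i<k. h i \<in> carrier G) \<longrightarrow>
        Df G H (\<Union>i<k. conj_elt G (h i) ` H) \<noteq> {})"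

definition FM :: "('a, 'b) monoid_scheme \<Rightarrow> bool" where
  "FM G \<longleftrightarrow> (\<exists>H. FM_pair G H)"

end

theory Submission
  imports Defs
begin

context group
begin

lemma foldr_gp_closed:
  "(\<forall>i\<in>set xs. x i \<in> carrier G) \<Longrightarrow> c \<in> carrier G \<Longrightarrow>
   foldr (\<lambda>i acc. x i \<otimes> acc) xs c \<in> carrier G"
  by (induction xs) auto

lemma foldr_gp_split:
  "(\<forall>i\<in>set xs. x i \<in> carrier G) \<Longrightarrow> c \<in> carrier G \<Longrightarrow>
   foldr (\<lambda>i acc. x i \<otimes> acc) xs c = foldr (\<lambda>i acc. x i \<otimes> acc) xs \<one> \<otimes> c"
proof (induction xs)
  case Nil then show ?case by simp
next
  case (Cons a xs)
  then show ?case using foldr_gp_closed[of xs x \<one>] by (simp add: m_assoc)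
qed

lemma gprod_0 [simp]: "gprod G x 0 = \<one>"
  by (simp add: gprod_def)

lemma gprod_closed: "(\<forall>i<k. x i \<in> carrier G) \<Longrightarrow> gprod G x k \<in> carrier G"
  unfolding gprod_def by (rule foldr_gp_closed) auto

lemma gprod_Suc: "(\<forall>i<Suc k. x i \<in> carrier G) \<Longrightarrow> gprod G x (Suc k) = gprod G x k \<otimes> x k"
  unfolding gprod_def
  by (subst foldr_gp_split[symmetric]) auto

lemma gprod_cong: "(\<forall>i<k. x i = y i) \<Longrightarrow> gprod G x k = gprod G y k"
  unfolding gprod_def by (intro foldr_cong) auto

lemma comm_gprod:
  assumes "w \<in> carrier G" "\<forall>l<n. f l \<in> carrier G \<and> w \<otimes> f l = f l \<otimes> w"
  shows "w \<otimes> gprod G f n = gprod G f n \<otimes> w"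
  using assms(2)
proof (induction n)
  case 0 then show ?case using assms(1) by simp
next
  case (Suc n)
  have c: "gprod G f n \<in> carrier G" using Suc.prems by (intro gprod_closed) auto
  have f: "f n \<in> carrier G" "w \<otimes> f n = f n \<otimes> w" using Suc.prems by auto
  have ih: "w \<otimes> gprod G f n = gprod G f n \<otimes> w" using Suc by auto
  have "w \<otimes> (gprod G f n \<otimes> f n) = (w \<otimes> gprod G f n) \<otimes> f n" using c f assms(1) by (simp add: m_assoc)
  also have "\<dots> = gprod G f n \<otimes> (w \<otimes> f n)" using c f assms(1) ih by (simp add: m_assoc)
  also have "\<dots> = (gprod G f n \<otimes> f n) \<otimes> w" using c f assms(1) by (simp add: m_assoc)
  finally show ?case using Suc.prems by (simp add: gprod_Suc)
qed

lemma gprod_mult_comm: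
  assumes "\<forall>i<k. a i \<in> carrier G \<and> b i \<in> carrier G"
    and "\<forall>i<k. \<forall>j<k. b j \<otimes> a i = a i \<otimes> b j"
  shows "gprod G (\<lambda>i. a i \<otimes> b i) k = gprod G a k \<otimes> gprod G b k"
  using assms
proof (induction k)
  case 0 then show ?case by simp
next
  case (Suc k)
  have ca: "gprod G a k \<in> carrier G" and cb: "gprod G b k \<in> carrier G"
    using Suc.prems by (auto intro!: gprod_closed)
  have ak: "a k \<in> carrier G" "b k \<in> carrier G" using Suc.prems by auto
  have com: "a k \<otimes> gprod G b k = gprod G b k \<otimes> a k"
    using Suc.prems by (intro comm_gprod) auto
  have ih: "gprod G (\<lambda>i. a i \<otimes> b i) k = gprod G a k \<otimes> gprod G b k" using Suc by auto
  have "gprod G (\<lambda>i. a i \<otimes> b i) (Suc k) = gprod G (\<lambda>i. a i \<otimes> b i) k \<otimes> (a k \<otimes> b k)"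
    using Suc.prems by (intro gprod_Suc) auto
  also have "\<dots> = gprod G a k \<otimes> (gprod G b k \<otimes> a k) \<otimes> b k" using ih ca cb ak by (simp add: m_assoc)
  also have "\<dots> = gprod G a k \<otimes> (a k \<otimes> gprod G b k) \<otimes> b k" using com by simp
  also have "\<dots> = (gprod G a k \<otimes> a k) \<otimes> (gprod G b k \<otimes> b k)" using ca cb ak by (simp add: m_assoc)
  finally show ?case using Suc.prems by (simp add: gprod_Suc)
qed

lemma hom_gprod:
  assumes "h \<in> hom G G" "\<forall>i<k. x i \<in> carrier G"
  shows "h (gprod G x k) = gprod G (\<lambda>i. h (x i)) k"
  using assms(2)
proof (induction k)
  case 0 then show ?case using assms(1) group_hom.hom_one[of G G h]
    by (simp add: group_hom_def group_hom_axioms_def is_group)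
next
  case (Suc k)
  have hc: "\<forall>i<Suc k. h (x i) \<in> carrier G" using Suc.prems assms(1) by (auto simp: hom_def)
  have "h (gprod G x (Suc k)) = h (gprod G x k \<otimes> x k)" using Suc.prems by (simp add: gprod_Suc)
  also have "\<dots> = h (gprod G x k) \<otimes> h (x k)" using assms(1) Suc.prems gprod_closed[of k x]
    by (simp add: hom_mult)
  finally show ?case using Suc hc by (simp add: gprod_Suc)
qed

lemma inv_cancel_left': "p \<in> carrier G \<Longrightarrow> z \<in> carrier G \<Longrightarrow> inv p \<otimes> (p \<otimes> z) = z"
  by (simp add: m_assoc[symmetric])

lemma inv_cancel_left'': "p \<in> carrier G \<Longrightarrow> z \<in> carrier G \<Longrightarrow> p \<otimes> (inv p \<otimes> z) = z"
  by (simp add: m_assoc[symmetric])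

lemma conj_hom: "p \<in> carrier G \<Longrightarrow> conj_elt G p \<in> hom G G"
  unfolding conj_elt_def
  by (rule homI) (auto simp: m_assoc inv_cancel_left')

lemma conj_closed: "p \<in> carrier G \<Longrightarrow> x \<in> carrier G \<Longrightarrow> conj_elt G p x \<in> carrier G"
  unfolding conj_elt_def by simp

lemma comm_inv: "x \<in> carrier G \<Longrightarrow> y \<in> carrier G \<Longrightarrow> x \<otimes> y = y \<otimes> x \<Longrightarrow> inv x \<otimes> y = y \<otimes> inv x"
  by (metis inv_closed inv_solve_left' m_assoc r_inv_ex inv_solve_right m_closed)

lemma comm_int_pow:
  assumes "x \<in> carrier G" "y \<in> carrier G" "x \<otimes> y = y \<otimes> x"
  shows "x [^] (a::int) \<otimes> y = y \<otimes> x [^] a"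
proof (cases "a \<ge> 0")
  case True
  then have "x [^] a = x [^] nat a" by (metis int_pow_int nat_0_le)
  then show ?thesis using group_commutes_pow assms by simp
next
  case False
  then have "x [^] a = inv (x [^] nat (-a))" using int_pow_neg_int[of x "nat (-a)"] assms by simp
  moreover have "x [^] nat (-a) \<otimes> y = y \<otimes> x [^] nat (-a)" using group_commutes_pow assms by simp
  ultimately show ?thesis using comm_inv assms by simp
qed

lemma insert_err:
  assumes nu: "cinv_pseudo_norm G \<nu>" and c: "\<forall>i<k. y i \<in> carrier G \<and> e i \<in> carrier G"
  shows "\<exists>E\<in>carrier G. gprod G (\<lambda>i. y i \<otimes> e i) k = gprod G y k \<otimes> E \<and> \<nu> E \<le> (\<Sum>i<k. \<nu> (e i))"
  using c
proof (induction k)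
  case 0 then show ?case using nu by (auto simp: cinv_pseudo_norm_def intro!: bexI[of _ \<one>])
next
  case (Suc k)
  then obtain E where E: "E \<in> carrier G" "gprod G (\<lambda>i. y i \<otimes> e i) k = gprod G y k \<otimes> E"
     "\<nu> E \<le> (\<Sum>i<k. \<nu> (e i))" by auto
  have cy: "gprod G y k \<in> carrier G" using Suc.prems by (auto intro!: gprod_closed)
  have yk: "y k \<in> carrier G" "e k \<in> carrier G" using Suc.prems by auto
  define E' where "E' = conj_elt G (inv (y k)) E \<otimes> e k"
  have E'c: "E' \<in> carrier G" unfolding E'_def using E yk by (simp add: conj_closed)
  have sa: "\<forall>f\<in>carrier G. \<forall>g\<in>carrier G. \<nu> (f \<otimes> g) \<le> \<nu> f + \<nu> g"
    using nu by (simp add: cinv_pseudo_norm_def)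
  have "\<nu> E' \<le> \<nu> (conj_elt G (inv (y k)) E) + \<nu> (e k)"
    unfolding E'_def using sa conj_closed[of "inv (y k)" E] E yk by simp
  also have "\<nu> (conj_elt G (inv (y k)) E) = \<nu> E" using nu E yk by (auto simp: cinv_pseudo_norm_def)
  finally have nE': "\<nu> E' \<le> (\<Sum>i<Suc k. \<nu> (e i))" using E(3) by simp
  have "gprod G (\<lambda>i. y i \<otimes> e i) (Suc k) = gprod G y k \<otimes> E \<otimes> (y k \<otimes> e k)"
    using Suc.prems E by (simp add: gprod_Suc)
  also have "\<dots> = (gprod G y k \<otimes> y k) \<otimes> E'"
    unfolding E'_def conj_elt_def using E yk cy by (simp add: m_assoc inv_cancel_left'')
  also have "\<dots> = gprod G y (Suc k) \<otimes> E'" using Suc.prems by (simp add: gprod_Suc)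
  finally show ?case using E'c nE' by blast
qed

lemma insert_err_norm:
  assumes nu: "cinv_pseudo_norm G \<nu>" and c: "\<forall>i<k. y i \<in> carrier G \<and> e i \<in> carrier G"
  shows "\<nu> (gprod G (\<lambda>i. y i \<otimes> e i) k) \<le> \<nu> (gprod G y k) + (\<Sum>i<k. \<nu> (e i))"
proof -
  obtain E where E: "E\<in>carrier G" "gprod G (\<lambda>i. y i \<otimes> e i) k = gprod G y k \<otimes> E" "\<nu> E \<le> (\<Sum>i<k. \<nu> (e i))"
    using insert_err[OF assms] by blast
  have cy: "gprod G y k \<in> carrier G" using c by (auto intro!: gprod_closed)
  have sa: "\<forall>f\<in>carrier G. \<forall>g\<in>carrier G. \<nu> (f \<otimes> g) \<le> \<nu> f + \<nu> g"
    using nu by (simp add: cinv_pseudo_norm_def)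
  show ?thesis using E cy sa[rule_format, of "gprod G y k" E] by simp
qed

end

lemma fekete_aux:
  fixes B :: "nat \<Rightarrow> real"
  assumes sub: "\<And>m n. B (m + n) \<le> B m + B n"
  shows "B (q * N + r) \<le> real q * B N + B r"
proof (induction q)
  case 0 then show ?case by simp
next
  case (Suc q)
  have "B (Suc q * N + r) = B (N + (q * N + r))" by (simp add: algebra_simps)
  also have "\<dots> \<le> B N + B (q * N + r)" by (rule sub)
  finally show ?case using Suc by (simp add: algebra_simps)
qed

lemma fekete:
  fixes B :: "nat \<Rightarrow> real"
  assumes sub: "\<And>m n. B (m + n) \<le> B m + B n" and nn: "\<And>n. B n \<ge> 0"
  shows "convergent (\<lambda>n. B n / real n)"
proof -
  define S where "S = (\<lambda>n. B (Suc n) / real (Suc n)) ` UNIV"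
  define L where "L = Inf S"
  have bdd: "bdd_below S" unfolding S_def using nn by (intro bdd_belowI[of _ 0]) auto
  have low: "L \<le> B n / real n" if n1: "n \<ge> 1" for n
  proof -
    obtain m where "n = Suc m" using n1 by (cases n) auto
    then have "B n / real n \<in> S" unfolding S_def by auto
    then show ?thesis unfolding L_def using bdd by (rule cInf_lower)
  qed
  have "(\<lambda>n. B n / real n) \<longlonglongrightarrow> L"
  proof (rule LIMSEQ_I)
    fix r :: real assume r: "r > 0"
    have "S \<noteq> {}" unfolding S_def by auto
    then obtain x where "x \<in> S" "x < L + r / 2" using r unfolding L_def
      by (metis cInf_lessD less_add_same_cancel1 half_gt_zero)
    then obtain N where N: "N \<ge> 1" "B N / real N < L + r / 2" unfolding S_def
    proof -
      from \<open>x \<in> S\<close> obtain m where "x = B (Suc m) / real (Suc m)" unfolding S_def by blast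
      then show ?thesis using that[of "Suc m"] \<open>x < L + r / 2\<close> by simp
    qed
    define M where "M = (\<Sum>i<N. B i)"
    have M0: "M \<ge> 0" unfolding M_def using nn by (intro sum_nonneg) auto
    have Mr: "B i \<le> M" if "i < N" for i
      unfolding M_def using that nn by (intro member_le_sum) auto
    define n0 where "n0 = nat \<lceil>2 * M / r\<rceil> + 1"
    show "\<exists>no. \<forall>n\<ge>no. norm (B n / real n - L) < r"
    proof (intro exI allI impI)
      fix n assume n: "n \<ge> n0"
      then have n1: "n \<ge> 1" unfolding n0_def by simp
      have npos: "real n > 0" using n1 by simp
      have "real n > 2 * M / r" using n unfolding n0_def by linarith
      then have Mn: "M / real n < r / 2" using r npos by (simp add: field_simps)
      have dec: "n = (n div N) * N + n mod N" by simp
      have "B n \<le> real (n div N) * B N + B (n mod N)"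
        by (subst dec, rule fekete_aux[OF sub])
      also have "B (n mod N) \<le> M" using Mr N(1) by simp
      finally have Bn: "B n \<le> real (n div N) * B N + M" by simp
      have qN: "real (n div N) * real N \<le> real n"
      proof -
        have "n div N * N \<le> n" by simp
        then show ?thesis by (metis of_nat_le_iff of_nat_mult)
      qed
      have "real (n div N) * B N = (real (n div N) * real N) * (B N / real N)" using N(1) by simp
      also have "\<dots> \<le> real n * (B N / real N)" using qN nn[of N] N(1)
        by (intro mult_right_mono) auto
      finally have "B n \<le> real n * (B N / real N) + M" using Bn by simp
      then have "B n / real n \<le> B N / real N + M / real n" using npos by (simp add: field_simps)
      then have up: "B n / real n < L + r" using N(2) Mn by linarith
      show "norm (B n / real n - L) < r" using up low[OF n1] r by simp
    qed
  qed
  then show ?thesis by (auto simp: convergent_def)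
qed


lemma (in group) FM_displace:
  fixes g :: "nat \<Rightarrow> 'a" and k :: nat
  assumes "FM G" "\<forall>i<k. g i \<in> carrier G"
  shows "\<exists>\<phi>\<in>carrier G. \<forall>i<k. \<forall>j<k. conj_elt G \<phi> (g j) \<otimes> g i = g i \<otimes> conj_elt G \<phi> (g j)"
proof -
  obtain H where H: "FM_pair G H" using assms(1) FM_def by auto
  have sg: "subgroup H G" and cg: "c_generated G H"
    and df: "\<forall>k (h::nat\<Rightarrow>'a). (\<forall>i<k. h i \<in> carrier G) \<longrightarrow> Df G H (\<Union>i<k. conj_elt G (h i) ` H) \<noteq> {}"
    using H unfolding FM_pair_def by auto
  have Hc: "H \<subseteq> carrier G" using sg subgroup.subset by blast
  have "\<forall>i. \<exists>t. i < k \<longrightarrow> ((\<forall>l<fst t. fst (snd t) l \<in> carrier G \<and> snd (snd t) l \<in> H) \<and>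
      g i = gprod G (\<lambda>l. conj_elt G (fst (snd t) l) (snd (snd t) l)) (fst t))"
  proof
    fix i
    show "\<exists>t. i < k \<longrightarrow> ((\<forall>l<fst t. fst (snd t) l \<in> carrier G \<and> snd (snd t) l \<in> H) \<and>
      g i = gprod G (\<lambda>l. conj_elt G (fst (snd t) l) (snd (snd t) l)) (fst t))"
    proof (cases "i < k")
      case True
      then obtain kk gg hh where "(\<forall>l<kk. gg l \<in> carrier G \<and> hh l \<in> H) \<and>
         g i = gprod G (\<lambda>l. conj_elt G (gg l) (hh l)) kk"
        using cg assms(2) unfolding c_generated_def by blast
      then show ?thesis by (intro exI[of _ "(kk, gg, hh)"]) simp
    qed simp
  qed
  then obtain T where T: "\<forall>i. i < k \<longrightarrow> ((\<forall>l<fst (T i). fst (snd (T i)) l \<in> carrier G \<and> snd (snd (T i)) l \<in> H) \<and>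
      g i = gprod G (\<lambda>l. conj_elt G (fst (snd (T i)) l) (snd (snd (T i)) l)) (fst (T i)))"
    by (rule choice[THEN exE]) blast
  define Kn where "Kn i = fst (T i)" for i
  define Ga where "Ga i = fst (snd (T i))" for i
  define Hh where "Hh i = snd (snd (T i))" for i
  have T': "\<And>i l. i < k \<Longrightarrow> l < Kn i \<Longrightarrow> Ga i l \<in> carrier G \<and> Hh i l \<in> H"
    and gi: "\<And>i. i < k \<Longrightarrow> g i = gprod G (\<lambda>l. conj_elt G (Ga i l) (Hh i l)) (Kn i)"
    using T unfolding Kn_def Ga_def Hh_def by auto
  define L where "L = concat (map (\<lambda>i. map (Ga i) [0..<Kn i]) [0..<k])"
  have Lset: "set L = {Ga i l | i l. i < k \<and> l < Kn i}" unfolding L_def by fastforce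
  have Lc: "\<forall>p<length L. L ! p \<in> carrier G"
  proof (intro allI impI)
    fix p assume "p < length L"
    then have "L ! p \<in> set L" by simp
    then show "L ! p \<in> carrier G" using Lset T' by auto
  qed
  define KK where "KK = (\<Union>p<length L. conj_elt G (L ! p) ` H)"
  have "Df G H KK \<noteq> {}" using df Lc unfolding KK_def by blast
  then obtain h0 where h0: "h0 \<in> Df G H KK" by blast
  then have h0c: "h0 \<in> carrier G" by (simp add: Df_def)
  from h0 obtain h where h: "h \<in> carrier G"
    "\<forall>x\<in>KK. \<forall>p<length L. \<forall>y\<in>H. conj_elt G (conj_elt G h h0) x \<otimes> conj_elt G (L ! p) y =
         conj_elt G (L ! p) y \<otimes> conj_elt G (conj_elt G h h0) x"
    using Lc unfolding Df_def by blast
  define \<phi> where "\<phi> = conj_elt G h h0"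
  have \<phi>c: "\<phi> \<in> carrier G" unfolding \<phi>_def using h h0c by (simp add: conj_closed)
  have KKc: "KK \<subseteq> carrier G" unfolding KK_def using Lc Hc by (auto intro!: conj_closed)
  have comm: "\<forall>x\<in>KK. \<forall>z\<in>KK. conj_elt G \<phi> x \<otimes> z = z \<otimes> conj_elt G \<phi> x"
    using h(2) unfolding \<phi>_def by (auto simp: KK_def[of])
  have inKK: "conj_elt G (Ga i l) (Hh i l) \<in> KK" if "i < k" "l < Kn i" for i l
  proof -
    have "Ga i l \<in> set L" using Lset that by auto
    then obtain p where "p < length L" "L ! p = Ga i l" by (metis in_set_conv_nth)
    moreover have "conj_elt G (Ga i l) (Hh i l) \<in> conj_elt G (L ! p) ` H"
      using T' that \<open>L ! p = Ga i l\<close> by simp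
    ultimately show ?thesis unfolding KK_def by blast
  qed
  have step1: "conj_elt G \<phi> x \<otimes> g i = g i \<otimes> conj_elt G \<phi> x" if "x \<in> KK" "i < k" for x i
  proof -
    have "conj_elt G \<phi> x \<otimes> gprod G (\<lambda>l. conj_elt G (Ga i l) (Hh i l)) (Kn i) =
          gprod G (\<lambda>l. conj_elt G (Ga i l) (Hh i l)) (Kn i) \<otimes> conj_elt G \<phi> x"
    proof (rule comm_gprod)
      show "conj_elt G \<phi> x \<in> carrier G" using that KKc \<phi>c conj_closed by blast
      show "\<forall>l<Kn i. conj_elt G (Ga i l) (Hh i l) \<in> carrier G \<and>
          conj_elt G \<phi> x \<otimes> conj_elt G (Ga i l) (Hh i l) = conj_elt G (Ga i l) (Hh i l) \<otimes> conj_elt G \<phi> x"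
        using that KKc inKK comm by blast
    qed
    then show ?thesis using gi that by simp
  qed
  have "\<forall>i<k. \<forall>j<k. conj_elt G \<phi> (g j) \<otimes> g i = g i \<otimes> conj_elt G \<phi> (g j)"
  proof (intro allI impI)
    fix i j assume ij: "i < k" "j < k"
    have cl: "\<forall>l<Kn j. conj_elt G (Ga j l) (Hh j l) \<in> carrier G" using inKK KKc ij by auto
    have e: "conj_elt G \<phi> (g j) = gprod G (\<lambda>l. conj_elt G \<phi> (conj_elt G (Ga j l) (Hh j l))) (Kn j)"
      using gi[OF ij(2)] hom_gprod[OF conj_hom[OF \<phi>c] cl] by simp
    have "g i \<otimes> gprod G (\<lambda>l. conj_elt G \<phi> (conj_elt G (Ga j l) (Hh j l))) (Kn j) =
          gprod G (\<lambda>l. conj_elt G \<phi> (conj_elt G (Ga j l) (Hh j l))) (Kn j) \<otimes> g i"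
    proof (rule comm_gprod)
      show "g i \<in> carrier G" using ij assms(2) by blast
      show "\<forall>l<Kn j. conj_elt G \<phi> (conj_elt G (Ga j l) (Hh j l)) \<in> carrier G \<and>
          g i \<otimes> conj_elt G \<phi> (conj_elt G (Ga j l) (Hh j l)) = conj_elt G \<phi> (conj_elt G (Ga j l) (Hh j l)) \<otimes> g i"
        using ij cl inKK step1 \<phi>c conj_closed by metis
    qed
    then show "conj_elt G \<phi> (g j) \<otimes> g i = g i \<otimes> conj_elt G \<phi> (g j)" using e by simp
  qed
  then show ?thesis using \<phi>c by blast
qed

lemma (in group) main_conv:
  fixes \<nu> :: "'a \<Rightarrow> real"
    and k :: nat and g :: "nat \<Rightarrow> 'a" and s :: "nat \<Rightarrow> real"
  assumes "FM G" and "cinv_pseudo_norm G \<nu>"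
    and "\<forall>i<k. g i \<in> carrier G"
  shows "convergent (\<lambda>n::nat. \<nu> (gprod G (\<lambda>i. g i [^] \<lfloor>s i * real n\<rfloor>) k) / real n)"
proof -
  note nu = assms(2)
  have nn: "\<forall>f\<in>carrier G. \<nu> f \<ge> 0" and n1: "\<nu> \<one> = 0"
    and ninv: "\<forall>f\<in>carrier G. \<nu> (inv f) = \<nu> f"
    and nsub: "\<forall>f\<in>carrier G. \<forall>g\<in>carrier G. \<nu> (f \<otimes> g) \<le> \<nu> f + \<nu> g"
    and nconj: "\<forall>f\<in>carrier G. \<forall>g\<in>carrier G. \<nu> (conj_elt G g f) = \<nu> f"
    using nu unfolding cinv_pseudo_norm_def by auto
  note gc = assms(3)
  obtain \<phi> where \<phi>c: "\<phi> \<in> carrier G"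
    and comm: "\<forall>i<k. \<forall>j<k. conj_elt G \<phi> (g j) \<otimes> g i = g i \<otimes> conj_elt G \<phi> (g j)"
    using FM_displace[OF assms(1) assms(3)] by blast
  define a where "a n i = \<lfloor>s i * real n\<rfloor>" for n i
  define T where "T n = gprod G (\<lambda>i. g i [^] a n i) k" for n
  define C where "C = (\<Sum>i<k. 2 * \<nu> \<phi> + \<nu> (g i))"
  have Tc: "T n \<in> carrier G" for n unfolding T_def using gc by (intro gprod_closed) auto
  have C0: "C \<ge> 0" unfolding C_def using nn \<phi>c gc by (intro sum_nonneg) auto
  have key: "\<nu> (T (n + m)) \<le> \<nu> (T n) + \<nu> (T m) + C" for n m
  proof -
    define d where "d i = a (n + m) i - a n i - a m i" for i
    have d01: "d i = 0 \<or> d i = 1" for i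
    proof -
      have "s i * real (n + m) = s i * real n + s i * real m" by (simp add: algebra_simps)
      then show ?thesis unfolding d_def a_def by (simp add: floor_add)
    qed
    define x where "x i = g i [^] a n i" for i
    define w where "w i = g i [^] a m i" for i
    define u where "u i = conj_elt G \<phi> (w i)" for i
    define e where "e i = inv (u i) \<otimes> w i \<otimes> g i [^] d i" for i
    have xc: "x i \<in> carrier G" "w i \<in> carrier G" "u i \<in> carrier G" "e i \<in> carrier G" if "i < k" for i
      using that gc \<phi>c unfolding x_def w_def u_def e_def by (auto intro!: conj_closed m_closed inv_closed)
    have eq: "g i [^] a (n + m) i = (x i \<otimes> u i) \<otimes> e i" if "i < k" for i
    proof -
      have "a (n + m) i = a n i + a m i + d i" unfolding d_def by simp
      then have "g i [^] a (n + m) i = x i \<otimes> w i \<otimes> g i [^] d i"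
        unfolding x_def w_def using gc that by (simp add: int_pow_mult)
      also have "\<dots> = (x i \<otimes> u i) \<otimes> e i"
        unfolding e_def using xc[OF that] gc that by (simp add: m_assoc inv_cancel_left'')
      finally show ?thesis .
    qed
    have "T (n + m) = gprod G (\<lambda>i. (x i \<otimes> u i) \<otimes> e i) k"
      unfolding T_def using eq by (intro gprod_cong) auto
    then have s1: "\<nu> (T (n + m)) \<le> \<nu> (gprod G (\<lambda>i. x i \<otimes> u i) k) + (\<Sum>i<k. \<nu> (e i))"
      using insert_err_norm[OF nu, of k "\<lambda>i. x i \<otimes> u i" e] xc by simp
    have uc: "u j \<otimes> x i = x i \<otimes> u j" if "i < k" "j < k" for i j
    proof -
      have cg: "conj_elt G \<phi> (g j) \<in> carrier G" using \<phi>c gc that by (simp add: conj_closed)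
      have "u j = conj_elt G \<phi> (g j) [^] a m j"
        unfolding u_def w_def using hom_int_pow[OF conj_hom[OF \<phi>c] _ is_group is_group] gc that by simp
      moreover have "conj_elt G \<phi> (g j) [^] a m j \<otimes> g i = g i \<otimes> conj_elt G \<phi> (g j) [^] a m j"
        using comm_int_pow[OF cg, of "g i"] comm that gc by simp
      then have "g i [^] a n i \<otimes> conj_elt G \<phi> (g j) [^] a m j = conj_elt G \<phi> (g j) [^] a m j \<otimes> g i [^] a n i"
        using comm_int_pow[of "g i" "conj_elt G \<phi> (g j) [^] a m j"] cg gc that by simp
      ultimately show ?thesis unfolding x_def by simp
    qed
    have "gprod G (\<lambda>i. x i \<otimes> u i) k = gprod G x k \<otimes> gprod G u k"
      using xc uc by (intro gprod_mult_comm) auto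
    also have "gprod G x k = T n" unfolding T_def x_def by simp
    also have "gprod G u k = conj_elt G \<phi> (T m)"
      unfolding T_def u_def w_def using hom_gprod[OF conj_hom[OF \<phi>c], of k "\<lambda>i. g i [^] a m i"] gc by simp
    finally have "\<nu> (gprod G (\<lambda>i. x i \<otimes> u i) k) \<le> \<nu> (T n) + \<nu> (T m)"
      using nsub[rule_format, OF Tc[of n] conj_closed[OF \<phi>c Tc[of m]]] nconj[rule_format, OF Tc[of m] \<phi>c] by simp
    moreover have "(\<Sum>i<k. \<nu> (e i)) \<le> C"
      unfolding C_def
    proof (rule sum_mono)
      fix i assume "i \<in> {..<k}"
      then have i: "i < k" by simp
      have gi: "g i \<in> carrier G" using gc i by simp
      have wi: "w i \<in> carrier G" using xc[OF i] by simp
      have e1: "inv (u i) \<otimes> w i = \<phi> \<otimes> conj_elt G (inv (w i)) (inv \<phi>)"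
        unfolding u_def conj_elt_def using \<phi>c wi by (simp add: m_assoc inv_mult_group)
      have "\<nu> (inv (u i) \<otimes> w i) \<le> \<nu> \<phi> + \<nu> (conj_elt G (inv (w i)) (inv \<phi>))"
        unfolding e1 using nsub \<phi>c wi by (simp add: conj_closed)
      also have "\<dots> = 2 * \<nu> \<phi>" using nconj ninv \<phi>c wi by simp
      finally have b1: "\<nu> (inv (u i) \<otimes> w i) \<le> 2 * \<nu> \<phi>" .
      have b2: "\<nu> (g i [^] d i) \<le> \<nu> (g i)"
        using d01[of i] n1 nn gi by auto
      have "\<nu> (e i) \<le> \<nu> (inv (u i) \<otimes> w i) + \<nu> (g i [^] d i)"
        unfolding e_def using nsub xc[OF i] gi by simp
      then show "\<nu> (e i) \<le> 2 * \<nu> \<phi> + \<nu> (g i)" using b1 b2 by simp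
    qed
    ultimately show ?thesis using s1 by simp
  qed
  define B where "B n = \<nu> (T n) + C" for n
  have "convergent (\<lambda>n. B n / real n)"
  proof (rule fekete)
    show "B (m + n) \<le> B m + B n" for m n unfolding B_def using key[of m n] C0 by simp
    show "B n \<ge> 0" for n unfolding B_def using nn Tc C0 by (simp add: add_nonneg_nonneg)
  qed
  moreover have "convergent (\<lambda>n. C / real n)"
    using lim_const_over_n[of C] by (auto simp: convergent_def)
  ultimately have "convergent (\<lambda>n. B n / real n - C / real n)" by (rule convergent_diff)
  moreover have "(\<lambda>n. B n / real n - C / real n) = (\<lambda>n. \<nu> (T n) / real n)"
    unfolding B_def by (simp add: diff_divide_distrib[symmetric])
  ultimately show ?thesis unfolding T_def a_def by simp
qed

theorem proposition2p1:
  fixes G :: "('a, 'b) monoid_scheme" and \<nu> :: "'a \<Rightarrow> real"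
    and k :: nat and g :: "nat \<Rightarrow> 'a" and s :: "nat \<Rightarrow> real"
  assumes "group G" and "FM G" and "cinv_pseudo_norm G \<nu>"
    and "\<forall>i<k. g i \<in> carrier G"
  shows "convergent (\<lambda>n::nat. \<nu> (gprod G (\<lambda>i. g i [^]\<^bsub>G\<^esub> \<lfloor>s i * real n\<rfloor>) k) / real n)"
  using group.main_conv[OF assms(1) assms(2) assms(3) assms(4)] .

end
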